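(* In the setting below, fix an assignment matrix $A$ for which event $\mathcal A$ holds. Then $$\mu^*(P^* )\ \ge\ \frac{\gamma}{3e^{2\kappa}} .$$
   Context: Setting. Let $n\ge1$ (number of users) and $m\ge2$ (number of items). Fix user parameters $\theta^*_1,\dots,\theta^*_n\in\mathbb R$ and item parameters $\beta^*_1,\dots,\beta^*_m\in\mathbb R$. Write $w^*_i=e^{\beta^*_i}$, $\kappa=\max_i\beta^*_i-\min_i\beta^*_i$, and $\pi^*_i=w^*_i/\sum_{k=1}^m w^*_k$. The responses $X_{li}\in\{0,1\}$ are independent with $\Pr(X_{li}=1)=e^{\theta^*_l}/(e^{\theta^*_l}+e^{\beta^*_i})$. Let $\gamma=\min_{l\in[n],\,i\ne j\in[m]}\mathbb E[X_{li}(1-X_{lj})]$. For an assignment matrix $A\in\{0,1\}^{n\times m}$ and $p\in(0,1]$, let $B=A^\top A$, $d=\frac32mnp^2$, and define $P^*_{ij}=\frac1d\sum_{l=1}^nA_{li}A_{lj}\mathbb E[X_{li}(1-X_{lj})]$ for $i\ne j$, $P^*_{ii}=1-\sum_{k\ne i}P^*_{ik}$; $P^*$ is reversible with respect to $\pi^*$. Event $\mathcal A$: $\frac12np^2\le B_{ij}\le\frac32np^2$ for all $i\ne j$. For a stochastic matrix $M$ reversible with respect to a positive probability vector (so its eigenvalues are real, $1=\lambda_1\ge\lambda_2\ge\dots\ge\lambda_m$), the spectral gap is $\mu^*(M)=1-\max\{|\lambda_2|,|\lambda_m|\}$. *)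

theory Defs
  imports "Jordan_Normal_Form.Char_Poly" "HOL-Computational_Algebra.Polynomial"
begin

(* Pr(X_{li} = 1) = e^theta_l / (e^theta_l + e^beta_i) *)
definition resp_prob :: "real \<Rightarrow> real \<Rightarrow> real" where
  "resp_prob th be = exp th / (exp th + exp be)"

(* E[X_{li}(1 - X_{lj})] for i \<noteq> j; by independence of X_{li} and X_{lj} *)
definition EX1mX :: "(nat \<Rightarrow> real) \<Rightarrow> (nat \<Rightarrow> real) \<Rightarrow> nat \<Rightarrow> nat \<Rightarrow> nat \<Rightarrow> real" where
  "EX1mX \<theta> \<beta> l i j = resp_prob (\<theta> l) (\<beta> i) * (1 - resp_prob (\<theta> l) (\<beta> j))"

definition gamma_min :: "nat \<Rightarrow> nat \<Rightarrow> (nat \<Rightarrow> real) \<Rightarrow> (nat \<Rightarrow> real) \<Rightarrow> real" where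
  "gamma_min n m \<theta> \<beta> = Min {EX1mX \<theta> \<beta> l i j | l i j. l < n \<and> i < m \<and> j < m \<and> i \<noteq> j}"

definition kappa :: "nat \<Rightarrow> (nat \<Rightarrow> real) \<Rightarrow> real" where
  "kappa m \<beta> = Max (\<beta> ` {..<m}) - Min (\<beta> ` {..<m})"

(* B = A^T A, A given as an n x m 0/1 matrix (users l < n, items i < m) *)
definition Bmat :: "nat \<Rightarrow> (nat \<Rightarrow> nat \<Rightarrow> real) \<Rightarrow> nat \<Rightarrow> nat \<Rightarrow> real" where
  "Bmat n A i j = (\<Sum>l<n. A l i * A l j)"

definition dconst :: "nat \<Rightarrow> nat \<Rightarrow> real \<Rightarrow> real" where
  "dconst n m p = 3/2 * real m * real n * p^2"

definition Poff :: "nat \<Rightarrow> nat \<Rightarrow> real \<Rightarrow> (nat \<Rightarrow> nat \<Rightarrow> real) \<Rightarrow> (nat \<Rightarrow> real) \<Rightarrow> (nat \<Rightarrow> real)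
    \<Rightarrow> nat \<Rightarrow> nat \<Rightarrow> real" where
  "Poff n m p A \<theta> \<beta> i j = (1 / dconst n m p) * (\<Sum>l<n. A l i * A l j * EX1mX \<theta> \<beta> l i j)"

definition Pstar :: "nat \<Rightarrow> nat \<Rightarrow> real \<Rightarrow> (nat \<Rightarrow> nat \<Rightarrow> real) \<Rightarrow> (nat \<Rightarrow> real) \<Rightarrow> (nat \<Rightarrow> real)
    \<Rightarrow> real mat" where
  "Pstar n m p A \<theta> \<beta> = mat m m (\<lambda>(i, j).
      if i = j then 1 - (\<Sum>k\<in>{..<m} - {i}. Poff n m p A \<theta> \<beta> i k)
      else Poff n m p A \<theta> \<beta> i j)"

definition event_A :: "nat \<Rightarrow> nat \<Rightarrow> real \<Rightarrow> (nat \<Rightarrow> nat \<Rightarrow> real) \<Rightarrow> bool" where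
  "event_A n m p A \<longleftrightarrow> (\<forall>i<m. \<forall>j<m. i \<noteq> j \<longrightarrow>
      1/2 * real n * p^2 \<le> Bmat n A i j \<and> Bmat n A i j \<le> 3/2 * real n * p^2)"

(* Eigenvalues of a real square matrix whose characteristic polynomial splits over the reals
   (e.g. a matrix reversible w.r.t. a positive probability vector), listed with algebraic
   multiplicity in non-increasing order: lambda_1 >= lambda_2 >= ... >= lambda_m. *)
definition eigs_desc :: "real mat \<Rightarrow> real list" where
  "eigs_desc M = (THE ls. sorted_wrt (\<ge>) ls \<and> char_poly M = (\<Prod>x\<leftarrow>ls. [:- x, 1:]))"

definition spectral_gap :: "real mat \<Rightarrow> real" where
  "spectral_gap M = 1 - max \<bar>eigs_desc M ! 1\<bar> \<bar>last (eigs_desc M)\<bar>"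

end

theory Submission imports Defs begin

lemma pl_upt: "prod_list (map f [0..<n]) = (\<Prod>i\<in>{0..<n}. f i)"
  by (metis distinct_upt prod.distinct_set_conv_list set_upt)

lemma det_rank1_lemma:
  fixes N :: "real mat"
  assumes N: "N \<in> carrier_mat n n" and n: "n > 0"
    and rs: "\<And>i. i < n \<Longrightarrow> (\<Sum>k<n. N $$ (i,k)) = s"
  shows "det (mat n n (\<lambda>(i,j). N $$ (i,j) + b)) * s = det N * (s + real n * b)"
proof -
  define E where "E = mat n n (\<lambda>(i,j). if i = j \<or> j = 0 then (1::real) else 0)"
  define D where "D = mat n n (\<lambda>(i,j). if i = j then (if i = 0 then s else 1) else (0::real))"
  define D' where "D' = mat n n (\<lambda>(i,j). if i = j then (if i = 0 then s + real n * b else 1) else (0::real))"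
  define G where "G = mat n n (\<lambda>(i,j). if j = 0 then (1::real) else N $$ (i,j))"
  define K where "K = mat n n (\<lambda>(i,j). if i = j then (1::real) else if i = 0 then b else 0)"
  define N' where "N' = mat n n (\<lambda>(i,j). N $$ (i,j) + b)"
  have c: "E \<in> carrier_mat n n" "D \<in> carrier_mat n n" "D' \<in> carrier_mat n n" "G \<in> carrier_mat n n"
     "K \<in> carrier_mat n n" "N' \<in> carrier_mat n n"
    unfolding E_def D_def D'_def G_def K_def N'_def by auto
  have dE: "det E = 1"
  proof -
    have "det E = prod_list (diag_mat E)"
      by (rule det_lower_triangular[OF _ c(1)]) (auto simp: E_def)
    also have "\<dots> = 1" unfolding diag_mat_def pl_upt using c(1) by (simp add: E_def)
    finally show ?thesis .
  qed
  have dK: "det K = 1"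
  proof -
    have "det K = prod_list (diag_mat K)"
      by (rule det_upper_triangular[OF _ c(5)]) (auto simp: K_def upper_triangular_def)
    also have "\<dots> = 1" unfolding diag_mat_def pl_upt using c(5) by (simp add: K_def)
    finally show ?thesis .
  qed
  have dD: "det D = s"
  proof -
    have "det D = prod_list (diag_mat D)"
      by (rule det_upper_triangular[OF _ c(2)]) (auto simp: D_def upper_triangular_def)
    also have "\<dots> = (\<Prod>i\<in>{0..<n}. if i = 0 then s else 1)" unfolding diag_mat_def pl_upt using c(2) 
      by (intro prod.cong) (auto simp add: D_def)
    also have "\<dots> = s" using n by (simp add: prod.delta)
    finally show ?thesis .
  qed
  have dD': "det D' = s + real n * b"
  proof -
    have "det D' = prod_list (diag_mat D')"
      by (rule det_upper_triangular[OF _ c(3)]) (auto simp: D'_def upper_triangular_def)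
    also have "\<dots> = (\<Prod>i\<in>{0..<n}. if i = 0 then s + real n * b else 1)" unfolding diag_mat_def pl_upt using c(3) 
      by (intro prod.cong) (auto simp add: D'_def)
    also have "\<dots> = s + real n * b" using n by (simp add: prod.delta)
    finally show ?thesis .
  qed
  have sumE: "(\<Sum>k\<in>{0..<n}. A $$ (i,k) * E $$ (k,j)) = (if j = 0 then (\<Sum>k<n. A $$ (i,k)) else A $$ (i,j))"
    if "j < n" for A :: "real mat" and i j
  proof (cases "j = 0")
    case True then show ?thesis using that by (auto simp: E_def atLeast0LessThan intro!: sum.cong)
  next
    case False
    have "(\<Sum>k\<in>{0..<n}. A $$ (i,k) * E $$ (k,j)) = (\<Sum>k\<in>{0..<n}. if k = j then A $$ (i,k) else 0)"
      using that False by (intro sum.cong) (auto simp: E_def)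
    also have "\<dots> = A $$ (i,j)" using that by simp
    finally show ?thesis using False by simp
  qed
  have NE: "N * E = G * D"
  proof (rule eq_matI)
    fix i j assume ij: "i < dim_row (G * D)" "j < dim_col (G * D)"
    hence ij': "i < n" "j < n" using c by auto
    have "(N * E) $$ (i,j) = (if j = 0 then s else N $$ (i,j))"
      using ij' N c(1) sumE[of j N i] rs[of i] by (simp add: scalar_prod_def)
    moreover have "(G * D) $$ (i,j) = (\<Sum>k\<in>{0..<n}. if k = j then G $$ (i,k) * D $$ (k,k) else 0)"
    proof -
      have "(G * D) $$ (i,j) = (\<Sum>k\<in>{0..<n}. G $$ (i,k) * D $$ (k,j))"
        using ij' c by (simp add: scalar_prod_def)
      also have "\<dots> = (\<Sum>k\<in>{0..<n}. if k = j then G $$ (i,k) * D $$ (k,k) else 0)"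
        using ij' by (intro sum.cong) (auto simp: D_def)
      finally show ?thesis .
    qed
    moreover have "\<dots> = G $$ (i,j) * D $$ (j,j)" using ij' by simp
    ultimately show "(N * E) $$ (i,j) = (G * D) $$ (i,j)" using ij' by (simp add: G_def D_def)
  qed (use c N in auto)
  define H where "H = G * K"
  have cH: "H \<in> carrier_mat n n" using c by (simp add: H_def)
  have N'E: "N' * E = H * D'"
  proof (rule eq_matI)
    fix i j assume ij: "i < dim_row (H * D')" "j < dim_col (H * D')"
    hence ij': "i < n" "j < n" using c cH by auto
    have rs': "(\<Sum>k<n. N' $$ (i,k)) = s + real n * b"
      using rs[OF ij'(1)] ij' by (simp add: N'_def sum.distrib)
    have "(N' * E) $$ (i,j) = (if j = 0 then s + real n * b else N $$ (i,j) + b)"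
      using ij' c sumE[of j N' i] rs' by (simp add: scalar_prod_def N'_def)
    moreover have GK: "H $$ (i,j) = (if j = 0 then 1 else N $$ (i,j) + b)"
    proof -
      have "H $$ (i,j) = (\<Sum>k\<in>{0..<n}. G $$ (i,k) * K $$ (k,j))"
        using ij' c by (simp add: scalar_prod_def H_def)
      also have "\<dots> = (\<Sum>k\<in>{0..<n}. (if k = j then G $$ (i,j) else 0) + (if k = 0 then (if j = 0 then 0 else b * G $$ (i,0)) else 0))"
        using ij' by (intro sum.cong) (auto simp: K_def)
      also have "\<dots> = G $$ (i,j) + (if j = 0 then 0 else b * G $$ (i,0))"
        using ij' n by (simp add: sum.distrib)
      finally show ?thesis using ij' n by (simp add: G_def)
    qed
    moreover have "(H * D') $$ (i,j) = (\<Sum>k\<in>{0..<n}. if k = j then H $$ (i,k) * D' $$ (k,k) else 0)"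
    proof -
      have "(H * D') $$ (i,j) = (\<Sum>k\<in>{0..<n}. H $$ (i,k) * D' $$ (k,j))"
        using ij' c cH by (simp add: scalar_prod_def)
      also have "\<dots> = (\<Sum>k\<in>{0..<n}. if k = j then H $$ (i,k) * D' $$ (k,k) else 0)"
        using ij' by (intro sum.cong) (auto simp: D'_def)
      finally show ?thesis .
    qed
    moreover have "\<dots> = H $$ (i,j) * D' $$ (j,j)" using ij' by simp
    ultimately show "(N' * E) $$ (i,j) = (H * D') $$ (i,j)" using ij' by (simp add: D'_def)
  qed (use c cH in auto)
  have 1: "det N = det G * s" using arg_cong[OF NE, of det] det_mult[OF N c(1)] det_mult[OF c(4) c(2)] dE dD by simp
  have 2: "det N' = det G * (s + real n * b)"
    using arg_cong[OF N'E, of det] det_mult[OF c(6) c(1)] det_mult[OF cH c(3)]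
      det_mult[OF c(4) c(5)] H_def dE dK dD' by simp
  show ?thesis using 1 2 unfolding N'_def[symmetric] by simp
qed

lemma poly_char_poly_det:
  fixes A :: "real mat"
  assumes A: "A \<in> carrier_mat n n"
  shows "poly (char_poly A) t = det (mat n n (\<lambda>(i,j). (if i = j then t else 0) - A $$ (i,j)))"
proof -
  have "- char_matrix A t = mat n n (\<lambda>(i,j). (if i = j then t else 0) - A $$ (i,j))"
    by (rule eq_matI) (use A in \<open>auto simp: char_matrix_def\<close>)
  thus ?thesis using char_poly_matrix[OF A] by simp
qed

lemma char_poly_shift:
  fixes A :: "real mat"
  assumes A: "A \<in> carrier_mat m m" and m: "m > 0"
    and rs: "\<And>i. i < m \<Longrightarrow> (\<Sum>k<m. A $$ (i,k)) = 1"
  shows "char_poly (mat m m (\<lambda>(i,j). A $$ (i,j) - c / real m)) * [:-1,1:]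
       = char_poly A * [:-(1-c),1:]"
proof -
  let ?M = "mat m m (\<lambda>(i,j). A $$ (i,j) - c / real m)"
  have "poly (char_poly ?M * [:-1,1:]) t = poly (char_poly A * [:-(1-c),1:]) t" for t
  proof -
    define N where "N = mat m m (\<lambda>(i,j). (if i = j then t else 0) - A $$ (i,j))"
    have N: "N \<in> carrier_mat m m" by (simp add: N_def)
    have rsN: "(\<Sum>k<m. N $$ (i,k)) = t - 1" if "i < m" for i
    proof -
      have "(\<Sum>k<m. N $$ (i,k)) = (\<Sum>k<m. (if k = i then t else 0)) - (\<Sum>k<m. A $$ (i,k))"
        using that by (simp add: N_def sum_subtractf) 
      also have "\<dots> = t - 1" using that rs[OF that] by simp
      finally show ?thesis .
    qed
    have eq: "mat m m (\<lambda>(i,j). (if i = j then t else 0) - ?M $$ (i,j)) = mat m m (\<lambda>(i,j). N $$ (i,j) + c / real m)"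
      by (rule eq_matI) (auto simp: N_def)
    have pM: "poly (char_poly ?M) t = det (mat m m (\<lambda>(i,j). (if i = j then t else 0) - ?M $$ (i,j)))"
      by (rule poly_char_poly_det) simp
    have "poly (char_poly ?M) t * (t - 1) = det N * (t - 1 + real m * (c / real m))"
      unfolding pM eq
      by (rule det_rank1_lemma[OF N m rsN]) auto
    also have "real m * (c / real m) = c" using m by simp
    finally have "poly (char_poly ?M) t * (t - 1) = det N * (t - 1 + c)" .
    moreover have "det N = poly (char_poly A) t" unfolding N_def poly_char_poly_det[OF A] ..
    ultimately show ?thesis by (simp add: algebra_simps)
  qed
  thus ?thesis using poly_eq_poly_eq_iff by blast
qed

lemma gershgorin_real:
  fixes M :: "real mat"
  assumes M: "M \<in> carrier_mat m m" and ev: "eigenvalue M lam"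
  shows "\<exists>i<m. \<bar>lam - M $$ (i,i)\<bar> \<le> (\<Sum>k\<in>{..<m}-{i}. \<bar>M $$ (i,k)\<bar>)"
proof -
  obtain v where v: "v \<in> carrier_vec m" "v \<noteq> 0\<^sub>v m" "M *\<^sub>v v = lam \<cdot>\<^sub>v v"
    using ev M unfolding eigenvalue_def eigenvector_def by auto
  have "m > 0"
  proof (rule ccontr)
    assume "\<not> m > 0" hence "m = 0" by simp
    hence "v = 0\<^sub>v m" using v(1) by (intro eq_vecI) auto
    thus False using v(2) by simp
  qed
  have "Max ((\<lambda>k. \<bar>v $ k\<bar>) ` {..<m}) \<in> (\<lambda>k. \<bar>v $ k\<bar>) ` {..<m}"
    using \<open>m > 0\<close> by (intro Max_in) auto
  then obtain i where i: "i \<in> {..<m}" and iM: "\<bar>v $ i\<bar> = Max ((\<lambda>k. \<bar>v $ k\<bar>) ` {..<m})" by auto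
  have imax: "\<And>k. k \<in> {..<m} \<Longrightarrow> \<bar>v $ k\<bar> \<le> \<bar>v $ i\<bar>"
    unfolding iM by (intro Max_ge) auto
  have vi: "\<bar>v $ i\<bar> > 0"
  proof (rule ccontr)
    assume "\<not> \<bar>v $ i\<bar> > 0"
    hence "\<And>k. k < m \<Longrightarrow> v $ k = 0" using imax by fastforce
    hence "v = 0\<^sub>v m" using v(1) by (intro eq_vecI) auto
    thus False using v(2) by simp
  qed
  have im: "i < m" using i by simp
  have "(M *\<^sub>v v) $ i = (\<Sum>k\<in>{0..<m}. M $$ (i,k) * v $ k)"
    using M v(1) im by (simp add: scalar_prod_def)
  also have "\<dots> = (\<Sum>k\<in>{..<m}. M $$ (i,k) * v $ k)" by (simp add: atLeast0LessThan)
  also have "\<dots> = M $$ (i,i) * v $ i + (\<Sum>k\<in>{..<m}-{i}. M $$ (i,k) * v $ k)"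
    using im by (subst sum.remove[of _ i]) auto
  finally have e1: "(M *\<^sub>v v) $ i = M $$ (i,i) * v $ i + (\<Sum>k\<in>{..<m}-{i}. M $$ (i,k) * v $ k)" .
  have "(M *\<^sub>v v) $ i = lam * v $ i" using v im by simp
  with e1 have "(lam - M $$ (i,i)) * v $ i = (\<Sum>k\<in>{..<m}-{i}. M $$ (i,k) * v $ k)"
    by (simp add: algebra_simps)
  hence "\<bar>lam - M $$ (i,i)\<bar> * \<bar>v $ i\<bar> = \<bar>\<Sum>k\<in>{..<m}-{i}. M $$ (i,k) * v $ k\<bar>"
    by (metis abs_mult)
  also have "\<dots> \<le> (\<Sum>k\<in>{..<m}-{i}. \<bar>M $$ (i,k)\<bar> * \<bar>v $ k\<bar>)"
    by (rule order_trans[OF sum_abs]) (simp add: abs_mult)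
  also have "\<dots> \<le> (\<Sum>k\<in>{..<m}-{i}. \<bar>M $$ (i,k)\<bar> * \<bar>v $ i\<bar>)"
    by (intro sum_mono mult_left_mono imax) auto
  also have "\<dots> = (\<Sum>k\<in>{..<m}-{i}. \<bar>M $$ (i,k)\<bar>) * \<bar>v $ i\<bar>"
    by (simp add: sum_distrib_right)
  finally have "\<bar>lam - M $$ (i,i)\<bar> \<le> (\<Sum>k\<in>{..<m}-{i}. \<bar>M $$ (i,k)\<bar>)"
    using vi by (simp add: mult_le_cancel_right)
  thus ?thesis using im by blast
qed


lemma symmetrizable_eig_real:
  fixes P :: "real mat"
  assumes P: "P \<in> carrier_mat m m" and w: "\<And>i. i < m \<Longrightarrow> w i > 0"
    and sym: "\<And>i j. i < m \<Longrightarrow> j < m \<Longrightarrow> w i * P $$ (i,j) = w j * P $$ (j,i)"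
    and ev: "eigenvalue (map_mat complex_of_real P) a"
  shows "Im a = 0"
proof -
  let ?PC = "map_mat complex_of_real P"
  obtain v where v: "v \<in> carrier_vec m" "v \<noteq> 0\<^sub>v m" "?PC *\<^sub>v v = a \<cdot>\<^sub>v v"
    using ev P unfolding eigenvalue_def eigenvector_def by auto
  have comp: "(\<Sum>j<m. of_real (P $$ (i,j)) * v $ j) = a * v $ i" if "i < m" for i
  proof -
    have "(?PC *\<^sub>v v) $ i = (\<Sum>j\<in>{0..<m}. of_real (P $$ (i,j)) * v $ j)"
      using P v(1) that by (simp add: scalar_prod_def)
    moreover have "(?PC *\<^sub>v v) $ i = a * v $ i" using v that P by simp
    ultimately show ?thesis by (simp add: atLeast0LessThan)
  qed
  define K where "K i j = complex_of_real (w i * P $$ (i,j))" for i j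
  define Q where "Q = (\<Sum>i<m. \<Sum>j<m. K i j * cnj (v $ i) * v $ j)"
  define W where "W = (\<Sum>i<m. w i * (cmod (v $ i))^2)"
  have "Q = (\<Sum>i<m. of_real (w i) * cnj (v $ i) * (\<Sum>j<m. of_real (P $$ (i,j)) * v $ j))"
    unfolding Q_def K_def by (simp add: sum_distrib_left mult_ac)
  also have "\<dots> = (\<Sum>i<m. a * (of_real (w i * (cmod (v $ i))^2)))"
  proof (intro sum.cong refl)
    fix i assume "i \<in> {..<m}"
    hence i: "i < m" by simp
    have nn: "cnj (v $ i) * v $ i = of_real ((cmod (v $ i))^2)"
      using complex_norm_square[of "v $ i"] by (simp add: mult.commute)
    show "of_real (w i) * cnj (v $ i) * (\<Sum>j<m. of_real (P $$ (i,j)) * v $ j) = a * (of_real (w i * (cmod (v $ i))^2))"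
      unfolding comp[OF i] using nn by (simp add: mult_ac)
  qed
  also have "\<dots> = a * of_real W" unfolding W_def by (simp add: sum_distrib_left)
  finally have QW: "Q = a * of_real W" .
  have "cnj Q = (\<Sum>i<m. \<Sum>j<m. K i j * v $ i * cnj (v $ j))"
    unfolding Q_def K_def by (simp add: mult_ac)
  also have "\<dots> = (\<Sum>j<m. \<Sum>i<m. K i j * v $ i * cnj (v $ j))" by (rule sum.swap)
  also have "\<dots> = Q" unfolding Q_def K_def
    by (intro sum.cong refl) (auto simp: sym mult_ac)
  finally have "cnj Q = Q" .
  hence "cnj a * of_real W = a * of_real W" using QW by simp
  moreover have "W > 0"
  proof -
    obtain i where i: "i < m" "v $ i \<noteq> 0"
      using v(1,2) by (metis carrier_vecD eq_vecI index_zero_vec(1) index_zero_vec(2))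
    have "w i * (cmod (v $ i))^2 > 0" using w[OF i(1)] i(2) by simp
    also have "\<dots> \<le> W" unfolding W_def
      by (intro member_le_sum mult_nonneg_nonneg) (auto simp: w less_imp_le i(1))
    finally show ?thesis .
  qed
  ultimately have "cnj a = a" by simp
  thus ?thesis by (metis complex_cnj_cancel_iff Im_complex_of_real Reals_cnj_iff Reals_def imageE)
qed

lemma symmetrizable_split:
  fixes P :: "real mat"
  assumes P: "P \<in> carrier_mat m m" and w: "\<And>i. i < m \<Longrightarrow> w i > 0"
    and sym: "\<And>i j. i < m \<Longrightarrow> j < m \<Longrightarrow> w i * P $$ (i,j) = w j * P $$ (j,i)"
  shows "\<exists>bs. char_poly P = (\<Prod>b\<leftarrow>bs. [:-b,1:]) \<and> length bs = m"
proof -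
  interpret R: map_poly_inj_idom_hom "of_real :: real \<Rightarrow> complex" ..
  let ?PC = "map_mat complex_of_real P"
  have PC: "?PC \<in> carrier_mat m m" using P by simp
  obtain as where as: "char_poly ?PC = (\<Prod>a\<leftarrow>as. [:-a,1:])" "length as = m"
    using char_poly_factorized[OF PC] by blast
  have re: "Im a = 0" if "a \<in> set as" for a
  proof -
    have "poly (char_poly ?PC) a = 0" unfolding as(1) using that
      by (simp add: poly_prod_list prod_list_zero_iff)
    hence E: "eigenvalue ?PC a" using eigenvalue_root_char_poly[OF PC] by simp
    show ?thesis by (rule symmetrizable_eig_real[where w=w, OF P _ _ E]) (auto simp: w sym)
  qed
  define bs where "bs = map Re as"
  have asbs: "as = map of_real bs" unfolding bs_def using re
    by (induct as) (auto simp: complex_eq_iff)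
  have "map_poly of_real (char_poly P) = char_poly ?PC"
    by (rule of_real_hom.char_poly_hom[OF P, symmetric])
  also have "\<dots> = map_poly of_real (\<Prod>b\<leftarrow>bs. [:-b,1:])"
    unfolding as(1) asbs R.hom_prod_list by (simp add: o_def)
  finally have "char_poly P = (\<Prod>b\<leftarrow>bs. [:-b,1:])" by (rule R.injectivity)
  moreover have "length bs = m" using as(2) bs_def by simp
  ultimately show ?thesis by blast
qed


lemma prod_list_map_mset:
  fixes f :: "'a \<Rightarrow> 'b::comm_monoid_mult"
  assumes h: "mset xs = mset ys"
  shows "prod_list (map f xs) = prod_list (map f ys)"
proof -
  have "prod_list (map f xs) = prod_mset (image_mset f (mset xs))"
    by (simp only: prod_mset_prod_list[symmetric] mset_map)
  also have "\<dots> = prod_mset (image_mset f (mset ys))" using h by simp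
  also have "\<dots> = prod_list (map f ys)"
    by (simp only: prod_mset_prod_list[symmetric] mset_map)
  finally show ?thesis .
qed

lemma prod_lin_mset:
  fixes xs ys :: "real list"
  shows "(\<Prod>x\<leftarrow>xs. [:-x,1:]) = (\<Prod>x\<leftarrow>ys. [:-x,1:]) \<Longrightarrow> mset xs = mset ys"
proof (induct xs arbitrary: ys)
  case Nil
  show ?case
  proof (cases ys)
    case (Cons y ys')
    have "poly (\<Prod>x\<leftarrow>ys. [:-x,1:]) y = 0" using Cons by simp
    thus ?thesis using Nil(1) by simp
  qed simp
next
  case (Cons x xs)
  have "poly (\<Prod>x\<leftarrow>ys. [:-x,1:]) x = 0" using Cons(2)[symmetric] by simp
  hence xy: "x \<in> set ys" by (auto simp: poly_prod_list prod_list_zero_iff)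
  hence msy: "mset ys = mset (x # remove1 x ys)" by simp
  hence "(\<Prod>x\<leftarrow>ys. [:-x,1:]) = [:-x,1:] * (\<Prod>x\<leftarrow>remove1 x ys. [:-x,1:])"
    using prod_list_map_mset[OF msy, of "\<lambda>x. [:-x,1:]"] by simp
  hence "[:-x,1:] * (\<Prod>x\<leftarrow>xs. [:-x,1:]) = [:-x,1:] * (\<Prod>x\<leftarrow>remove1 x ys. [:-x,1:])"
    using Cons(2) by simp
  hence "(\<Prod>x\<leftarrow>xs. [:-x,1:]) = (\<Prod>x\<leftarrow>remove1 x ys. [:-x,1:])"
    by (subst (asm) mult_left_cancel) auto
  from Cons(1)[OF this] xy show ?case by simp
qed

lemma eigs_desc_props:
  fixes P :: "real mat"
  assumes "char_poly P = (\<Prod>b\<leftarrow>bs. [:-b,1:])"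
  shows "sorted_wrt (\<ge>) (eigs_desc P) \<and> char_poly P = (\<Prod>x\<leftarrow>eigs_desc P. [:-x,1:])"
proof -
  let ?Q = "\<lambda>ls. sorted_wrt (\<ge>) ls \<and> char_poly P = (\<Prod>x\<leftarrow>ls. [:-x,1:])"
  have ex: "?Q (rev (sort bs))"
  proof
    show "sorted_wrt (\<ge>) (rev (sort bs))" by (simp add: sorted_wrt_rev)
    show "char_poly P = (\<Prod>x\<leftarrow>rev (sort bs). [:-x,1:])"
      unfolding assms by (rule prod_list_map_mset) simp
  qed
  have un: "ls = rev (sort bs)" if "?Q ls" for ls
  proof -
    have ms: "mset ls = mset bs" using that assms by (intro prod_lin_mset) simp
    have "sorted (rev ls)" using that by (simp add: sorted_wrt_rev)
    hence "sort bs = rev ls" using ms by (intro properties_for_sort) auto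
    thus ?thesis by simp
  qed
  have "?Q (THE ls. ?Q ls)" by (rule theI[of ?Q, OF ex un])
  thus ?thesis unfolding eigs_desc_def .
qed

lemma resp_bounds: "0 < resp_prob a b" "resp_prob a b < 1"
  unfolding resp_prob_def by (auto simp: divide_less_eq add_pos_pos)

lemma one_minus_resp: "1 - resp_prob a b = exp b / (exp a + exp b)"
proof -
  have h: "exp a + exp b > 0" by (simp add: add_pos_pos)
  hence "1 = (exp a + exp b) / (exp a + exp b)" by simp
  hence "1 - resp_prob a b = (exp a + exp b) / (exp a + exp b) - exp a / (exp a + exp b)"
    unfolding resp_prob_def by simp
  also have "\<dots> = exp b / (exp a + exp b)" by (metis add_diff_cancel_left' diff_divide_distrib)
  finally show ?thesis .
qed

lemma EX_sym: "exp (\<beta> i) * EX1mX \<theta> \<beta> l i j = exp (\<beta> j) * EX1mX \<theta> \<beta> l j i"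
proof -
  have g: "a * (x / c * (b / e)) = (a * x * b) / (c * e)" for a x b c e :: real by simp
  show ?thesis unfolding EX1mX_def one_minus_resp unfolding resp_prob_def g
    by (simp add: mult_ac)
qed

lemma EX_pos: "EX1mX \<theta> \<beta> l i j > 0"
  unfolding EX1mX_def using resp_bounds by auto

lemma EX_le: "EX1mX \<theta> \<beta> l i j \<le> 1 - EX1mX \<theta> \<beta> l j i"
proof -
  have a: "0 < resp_prob (\<theta> l) (\<beta> i)" "resp_prob (\<theta> l) (\<beta> i) < 1"
    "0 < resp_prob (\<theta> l) (\<beta> j)" "resp_prob (\<theta> l) (\<beta> j) < 1" using resp_bounds by auto
  have "EX1mX \<theta> \<beta> l i j \<le> resp_prob (\<theta> l) (\<beta> i)"
    unfolding EX1mX_def using a by (simp add: mult_left_le)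
  moreover have "EX1mX \<theta> \<beta> l j i \<le> 1 - resp_prob (\<theta> l) (\<beta> i)"
    unfolding EX1mX_def using a by (simp add: mult_left_le_one_le)
  ultimately show ?thesis by simp
qed

lemma gamma_facts:
  assumes "n \<ge> 1" "m \<ge> 2"
  shows "gamma_min n m \<theta> \<beta> > 0"
    and "\<And>l i j. l < n \<Longrightarrow> i < m \<Longrightarrow> j < m \<Longrightarrow> i \<noteq> j \<Longrightarrow> gamma_min n m \<theta> \<beta> \<le> EX1mX \<theta> \<beta> l i j"
proof -
  let ?S = "{EX1mX \<theta> \<beta> l i j | l i j. l < n \<and> i < m \<and> j < m \<and> i \<noteq> j}"
  have "?S \<subseteq> (\<lambda>(l,i,j). EX1mX \<theta> \<beta> l i j) ` ({..<n} \<times> {..<m} \<times> {..<m})"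
  proof
    fix x assume "x \<in> ?S"
    then obtain l i j where "x = EX1mX \<theta> \<beta> l i j" "l < n" "i < m" "j < m" by blast
    thus "x \<in> (\<lambda>(l,i,j). EX1mX \<theta> \<beta> l i j) ` ({..<n} \<times> {..<m} \<times> {..<m})"
      by (intro image_eqI[of _ _ "(l,i,j)"]) auto
  qed
  hence fin: "finite ?S" by (rule finite_subset) auto
  have "0 < n" "0 < m" "1 < m" "(0::nat) \<noteq> 1" using assms by auto
  hence "EX1mX \<theta> \<beta> 0 0 1 \<in> ?S" by blast
  hence ne: "?S \<noteq> {}" by blast
  have "Min ?S \<in> ?S" using fin ne by (rule Min_in)
  thus "gamma_min n m \<theta> \<beta> > 0" unfolding gamma_min_def using EX_pos by auto
  show "gamma_min n m \<theta> \<beta> \<le> EX1mX \<theta> \<beta> l i j" if "l < n" "i < m" "j < m" "i \<noteq> j" for l i j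
    unfolding gamma_min_def using fin that by (intro Min_le) auto
qed

lemma kappa_nonneg: assumes "m \<ge> 1" shows "kappa m \<beta> \<ge> 0"
proof -
  have b: "\<beta> 0 \<in> \<beta> ` {..<m}" using assms by simp
  have "Min (\<beta> ` {..<m}) \<le> \<beta> 0" by (rule Min_le[OF _ b]) simp
  moreover have "\<beta> 0 \<le> Max (\<beta> ` {..<m})" by (rule Max_ge[OF _ b]) simp
  ultimately show ?thesis unfolding kappa_def by simp
qed

lemma list_two: assumes "length ls \<ge> 2" shows "ls = ls ! 0 # ls ! 1 # drop 2 ls"
proof (cases ls)
  case (Cons x t)
  then show ?thesis using assms by (cases t) auto
qed (use assms in simp)


theorem mainTheorem9:
  fixes n m :: nat and p :: real
    and \<theta> \<beta> :: "nat \<Rightarrow> real"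
    and A :: "nat \<Rightarrow> nat \<Rightarrow> real"
  assumes "n \<ge> 1" and "m \<ge> 2"
    and "0 < p" and "p \<le> 1"
    and "\<forall>l<n. \<forall>i<m. A l i \<in> {0, 1}"
    and "event_A n m p A"
  shows "spectral_gap (Pstar n m p A \<theta> \<beta>)
           \<ge> gamma_min n m \<theta> \<beta> / (3 * exp (2 * kappa m \<beta>))"
proof -
  note n1 = assms(1) and m2 = assms(2) and p0 = assms(3) and A01 = assms(5) and evA = assms(6)
  define P where "P = Pstar n m p A \<theta> \<beta>"
  define \<gamma> where "\<gamma> = gamma_min n m \<theta> \<beta>"
  define Q where "Q i j = Poff n m p A \<theta> \<beta> i j" for i j
  define d where "d = dconst n m p"
  have m0: "m > 0" using m2 by simp
  have Pc: "P \<in> carrier_mat m m" by (simp add: P_def Pstar_def)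
  have Pidx: "P $$ (i,j) = (if i = j then 1 - (\<Sum>k\<in>{..<m}-{i}. Q i k) else Q i j)"
    if "i < m" "j < m" for i j using that by (simp add: P_def Pstar_def Q_def)
  have gpos: "\<gamma> > 0" unfolding \<gamma>_def by (rule gamma_facts(1)[OF n1 m2])
  have gle: "\<gamma> \<le> EX1mX \<theta> \<beta> l i j" if "l < n" "i < m" "j < m" "i \<noteq> j" for l i j
    unfolding \<gamma>_def by (rule gamma_facts(2)[OF n1 m2 that])
  have Ele: "EX1mX \<theta> \<beta> l i j \<le> 1 - \<gamma>" if "l < n" "i < m" "j < m" "i \<noteq> j" for l i j
    using EX_le[of \<theta> \<beta> l i j] gle[of l j i] that by auto
  have g1: "\<gamma> < 1" using Ele[of 0 0 1] EX_pos[of \<theta> \<beta> 0 0 1] n1 m2 by auto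
  have dpos: "d > 0" unfolding d_def dconst_def using n1 m2 p0 by simp
  have AA: "0 \<le> A l i * A l j" if "l < n" "i < m" "j < m" for l i j
  proof -
    have "A l i \<in> {0,1}" "A l j \<in> {0,1}" using A01 that by auto
    thus ?thesis by auto
  qed
  have Bb: "1/2 * real n * p^2 \<le> Bmat n A i j" "Bmat n A i j \<le> 3/2 * real n * p^2"
    if "i < m" "j < m" "i \<noteq> j" for i j using evA that unfolding event_A_def by auto
  have Qlo: "\<gamma> / (3 * real m) \<le> Q i j" if ij: "i < m" "j < m" "i \<noteq> j" for i j
  proof -
    let ?S = "\<Sum>l<n. A l i * A l j * EX1mX \<theta> \<beta> l i j"
    have "\<gamma> * Bmat n A i j = (\<Sum>l<n. A l i * A l j * \<gamma>)"
      unfolding Bmat_def by (simp add: sum_distrib_left mult_ac)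
    also have "\<dots> \<le> ?S" using ij by (intro sum_mono mult_left_mono gle AA) auto
    finally have h1: "\<gamma> * Bmat n A i j \<le> ?S" .
    have "\<gamma> * (1/2 * real n * p^2) \<le> \<gamma> * Bmat n A i j"
      using Bb[OF ij] gpos by (intro mult_left_mono) auto
    hence h2: "\<gamma> * (1/2 * real n * p^2) \<le> ?S" using h1 by linarith
    have "\<gamma> / (3 * real m) = \<gamma> * (1/2 * real n * p^2) / d"
      unfolding d_def dconst_def using n1 p0 m0 by (simp add: field_simps power2_eq_square)
    also have "\<dots> \<le> ?S / d" using h2 dpos by (intro divide_right_mono) auto
    also have "\<dots> = Q i j" unfolding Q_def Poff_def d_def by simp
    finally show ?thesis .
  qed
  have Qhi: "Q i j \<le> (1 - \<gamma>) / real m" if ij: "i < m" "j < m" "i \<noteq> j" for i j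
  proof -
    let ?S = "\<Sum>l<n. A l i * A l j * EX1mX \<theta> \<beta> l i j"
    have "?S \<le> (\<Sum>l<n. A l i * A l j * (1 - \<gamma>))"
      using ij by (intro sum_mono mult_left_mono Ele AA) auto
    also have "\<dots> = (1 - \<gamma>) * Bmat n A i j"
      unfolding Bmat_def by (simp add: sum_distrib_left mult_ac)
    also have "\<dots> \<le> (1 - \<gamma>) * (3/2 * real n * p^2)"
      using Bb[OF ij] g1 by (intro mult_left_mono) auto
    finally have h: "?S \<le> (1 - \<gamma>) * (3/2 * real n * p^2)" .
    have "Q i j = ?S / d" unfolding Q_def Poff_def d_def by simp
    also have "\<dots> \<le> (1 - \<gamma>) * (3/2 * real n * p^2) / d" using h dpos by (intro divide_right_mono) auto
    also have "\<dots> = (1 - \<gamma>) / real m"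
      unfolding d_def dconst_def using n1 p0 m0 by (simp add: field_simps power2_eq_square)
    finally show ?thesis .
  qed
  have Qnn: "Q i j \<ge> 0" if "i < m" "j < m" "i \<noteq> j" for i j
    using Qlo[OF that] gpos m0 by (smt (verit) divide_nonneg_pos of_nat_0_less_iff)
  define S where "S i = (\<Sum>k\<in>{..<m}-{i}. Q i k)" for i
  have Sle: "S i \<le> 1 - \<gamma>" if i: "i < m" for i
  proof -
    have "S i \<le> real (card ({..<m}-{i})) * ((1 - \<gamma>) / real m)"
      unfolding S_def by (rule sum_bounded_above) (use Qhi i in auto)
    also have "card ({..<m}-{i}) = m - 1" using i by simp
    also have "real (m - 1) * ((1 - \<gamma>) / real m) \<le> 1 * (1 - \<gamma>)"
    proof -
      have "real (m - 1) * ((1 - \<gamma>) / real m) = (real (m-1) / real m) * (1 - \<gamma>)" by simp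
      also have "\<dots> \<le> 1 * (1 - \<gamma>)" using g1 m0 by (intro mult_right_mono) auto
      finally show ?thesis .
    qed
    finally show ?thesis by simp
  qed
  have rowsplit: "(\<Sum>k<m. f k) = f i + (\<Sum>k\<in>{..<m}-{i}. f k)" if "i < m" for f :: "nat \<Rightarrow> real" and i
    using that by (subst sum.remove[of _ i]) auto
  have offQ: "(\<Sum>k\<in>{..<m}-{i}. g (P $$ (i,k))) = (\<Sum>k\<in>{..<m}-{i}. g (Q i k))" if "i < m" for i g
    using that by (intro sum.cong) (auto simp: Pidx)
  have rows: "(\<Sum>k<m. P $$ (i,k)) = 1" if i: "i < m" for i
    using rowsplit[OF i, of "\<lambda>k. P $$ (i,k)"] offQ[OF i, of "\<lambda>x. x"] Pidx[OF i i] by simp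
  have Pii: "P $$ (i,i) = 1 - S i" if "i < m" for i using Pidx[OF that that] S_def by simp
  have sym: "exp (\<beta> i) * P $$ (i,j) = exp (\<beta> j) * P $$ (j,i)" if ij: "i < m" "j < m" for i j
  proof (cases "i = j")
    case False
    have "exp (\<beta> i) * Q i j = exp (\<beta> j) * Q j i"
      unfolding Q_def Poff_def
      by (simp add: sum_distrib_left mult_ac EX_sym[of \<beta> i \<theta> _ j])
    thus ?thesis using ij False by (simp add: Pidx)
  qed simp
  obtain bs where bs: "char_poly P = (\<Prod>b\<leftarrow>bs. [:-b,1:])" "length bs = m"
    using symmetrizable_split[OF Pc, of "\<lambda>i. exp (\<beta> i)"] sym by auto
  define ls where "ls = eigs_desc P"
  have ls: "sorted_wrt (\<ge>) ls" "char_poly P = (\<Prod>x\<leftarrow>ls. [:-x,1:])"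
    using eigs_desc_props[OF bs(1)] unfolding ls_def by auto
  have "mset ls = mset bs" using ls(2) bs(1) by (intro prod_lin_mset) simp
  hence lenls: "length ls = m" using bs(2) by (metis size_mset)
  have eigP: "eigenvalue P x" if "x \<in> set ls" for x
  proof -
    have "poly (char_poly P) x = 0" unfolding ls(2) using that
      by (simp add: poly_prod_list prod_list_zero_iff)
    thus ?thesis using eigenvalue_root_char_poly[OF Pc] by simp
  qed
  have lower: "x \<ge> 2 * \<gamma> - 1" if xin: "x \<in> set ls" for x
  proof -
    obtain i where i: "i < m" and gi: "\<bar>x - P $$ (i,i)\<bar> \<le> (\<Sum>k\<in>{..<m}-{i}. \<bar>P $$ (i,k)\<bar>)"
      using gershgorin_real[OF Pc eigP[OF xin]] by blast
    have "(\<Sum>k\<in>{..<m}-{i}. \<bar>P $$ (i,k)\<bar>) = (\<Sum>k\<in>{..<m}-{i}. \<bar>Q i k\<bar>)"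
      by (rule offQ[OF i, of abs])
    also have "\<dots> = S i" unfolding S_def using Qnn i by (intro sum.cong) auto
    finally have "\<bar>x - (1 - S i)\<bar> \<le> S i" using gi Pii[OF i] by simp
    thus ?thesis using Sle[OF i] by linarith
  qed
  define c where "c = \<gamma> / 3"
  define M where "M = mat m m (\<lambda>(i,j). P $$ (i,j) - c / real m)"
  have Mc: "M \<in> carrier_mat m m" by (simp add: M_def)
  have upperM: "y \<le> 1 - c" if ev: "eigenvalue M y" for y
  proof -
    obtain i where i: "i < m" and gi: "\<bar>y - M $$ (i,i)\<bar> \<le> (\<Sum>k\<in>{..<m}-{i}. \<bar>M $$ (i,k)\<bar>)"
      using gershgorin_real[OF Mc ev] by blast
    have "(\<Sum>k\<in>{..<m}-{i}. \<bar>M $$ (i,k)\<bar>) = (\<Sum>k\<in>{..<m}-{i}. M $$ (i,k))"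
    proof (intro sum.cong refl)
      fix k assume k: "k \<in> {..<m}-{i}"
      hence "M $$ (i,k) = Q i k - c / real m" using i by (simp add: M_def Pidx)
      moreover have "Q i k \<ge> c / real m" using Qlo[of i k] k i unfolding c_def by auto
      ultimately show "\<bar>M $$ (i,k)\<bar> = M $$ (i,k)" by simp
    qed
    hence "y \<le> M $$ (i,i) + (\<Sum>k\<in>{..<m}-{i}. M $$ (i,k))" using gi by linarith
    also have "\<dots> = (\<Sum>k<m. M $$ (i,k))" using rowsplit[OF i, of "\<lambda>k. M $$ (i,k)"] by simp
    also have "\<dots> = (\<Sum>k<m. P $$ (i,k) - c / real m)" using i by (intro sum.cong) (auto simp: M_def)
    also have "\<dots> = 1 - c" using rows[OF i] m0 by (simp add: sum_subtractf)
    finally show ?thesis .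
  qed
  have ident: "char_poly M * [:-1,1:] = char_poly P * [:-(1-c),1:]"
    unfolding M_def by (rule char_poly_shift[OF Pc m0 rows])
  have R: "x \<le> 1 - c" if x: "x \<in> set ls" "x \<noteq> 1" for x
  proof -
    have "poly (char_poly P) x = 0" unfolding ls(2) using x
      by (simp add: poly_prod_list prod_list_zero_iff)
    hence "poly (char_poly M) x * (x - 1) = 0"
      using arg_cong[OF ident, of "\<lambda>q. poly q x"] by simp
    hence "poly (char_poly M) x = 0" using x(2) by simp
    hence "eigenvalue M x" using eigenvalue_root_char_poly[OF Mc] by simp
    thus ?thesis by (rule upperM)
  qed
  have cpos: "c > 0" unfolding c_def using gpos by simp
  have l01: "ls ! 1 \<le> ls ! 0" using ls(1) lenls m2 by (auto simp: sorted_wrt_iff_nth_less)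
  have in1: "ls ! 1 \<in> set ls" "ls ! 0 \<in> set ls" using lenls m2 by auto
  have key: "ls ! 1 \<le> 1 - c"
  proof (rule ccontr)
    assume "\<not> ls ! 1 \<le> 1 - c"
    hence h1: "ls ! 1 = 1" and h0: "ls ! 0 = 1" using R in1 l01 by (metis linorder_not_le order_less_le_trans)+
    define q :: "real poly" where "q = [:-1,1:]"
    define Rp where "Rp = (\<Prod>x\<leftarrow>drop 2 ls. [:-x,1:])"
    define r :: "real poly" where "r = [:-(1-c),1:]"
    have cp: "char_poly P = q * (q * Rp)"
      unfolding ls(2) q_def Rp_def by (subst list_two[of ls]) (use lenls m2 h0 h1 in auto)
    have idr: "char_poly M * q = char_poly P * r" using ident unfolding q_def r_def .
    have "q * char_poly M = char_poly M * q" by (rule mult.commute)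
    also have "\<dots> = q * (q * Rp) * r" using idr cp by simp
    also have "\<dots> = q * (q * Rp * r)" by (simp only: mult.assoc)
    finally have "q * char_poly M = q * (q * Rp * r)" .
    moreover have "q \<noteq> 0" unfolding q_def by simp
    ultimately have "char_poly M = q * Rp * r" by simp
    hence "poly (char_poly M) 1 = 0" unfolding q_def by simp
    hence "eigenvalue M 1" using eigenvalue_root_char_poly[OF Mc] by simp
    hence "1 \<le> 1 - c" by (rule upperM)
    thus False using cpos by simp
  qed
  have lsne: "ls \<noteq> []" using lenls m2 by auto
  have lastl: "last ls = ls ! (m - 1)" using last_conv_nth[OF lsne] lenls by simp
  have last_le: "last ls \<le> ls ! 1"
  proof (cases "m - 1 = 1")
    case True thus ?thesis using lastl by simp
  next
    case False thus ?thesis using lastl ls(1) lenls m2 by (auto simp: sorted_wrt_iff_nth_less)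
  qed
  have inl: "last ls \<in> set ls" using lenls m2 by (metis last_in_set list.size(3) not_numeral_le_zero)
  have b1: "\<bar>ls ! 1\<bar> \<le> 1 - c" using key lower[OF in1(1)] gpos unfolding c_def by auto
  have b2: "\<bar>last ls\<bar> \<le> 1 - c" using key last_le lower[OF inl] gpos unfolding c_def by auto
  have gap: "spectral_gap P \<ge> c"
    unfolding spectral_gap_def ls_def[symmetric] using b1 b2 by simp
  have "exp (2 * kappa m \<beta>) \<ge> 1" using kappa_nonneg[of m \<beta>] m2 by simp
  hence "\<gamma> / (3 * exp (2 * kappa m \<beta>)) \<le> \<gamma> / 3"
    using gpos by (intro divide_left_mono) auto
  thus ?thesis using gap unfolding P_def[symmetric] \<gamma>_def[symmetric] c_def by linarith
qed

end
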